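(* Let $n\ge4$. For every pseudo-composition $\alpha$ of $n$, \[ r^D_\alpha=\sum_{\beta\preccurlyeq\alpha}(-1)^{\ell(\alpha)-\ell(\beta)}\nu(\beta), \] where the sum is over pseudo-compositions $\beta=(\beta_1,\ldots,\beta_\ell)$ of $n$ with $D(\beta)\subseteq D(\alpha)$, and \[ \nu(\beta):=\begin{cases} 2^{n-1}\binom{n}{\beta_1,\ldots,\beta_\ell} & \text{if } \beta_1=0,\\ 2^{n-1}\binom{n}{1+\beta_2,\beta_3,\ldots,\beta_\ell} & \text{if }\beta_1=1,\\ 2^{n-\beta_1}\binom{n}{\beta_1,\ldots,\beta_\ell} & \text{if } 1<\beta_1\le n.\end{cases} \]
   Context: A signed permutation of $[n]$ is a bijection $w$ of $\{\pm1,\ldots,\pm n\}$ with $w(-i)=-w(i)$; it is even if an even number of $w(1),\ldots,w(n)$ are negative. The even signed permutations form the group $\mathfrak{S}^D_n$. For $w\in\mathfrak{S}^D_n$, with the convention $w(0):=-w(2)$, the descent set is $D(w)=\{i\in\{0,1,\ldots,n-1\}: w(i)>w(i+1)\}$. A pseudo-composition of $n$ ($\alpha\models_0 n$) is a sequence $(\alpha_1,\ldots,\alpha_\ell)$ of integers with $\alpha_1\ge0$, $\alpha_2,\ldots,\alpha_\ell>0$ and sum $n$; its length is $\ell(\alpha)=\ell$ and $D(\alpha)=\{\alpha_1,\alpha_1+\alpha_2,\ldots,\alpha_1+\cdots+\alpha_{\ell-1}\}$. The type $D$ ribbon number is $r^D_\alpha=|\{w\in\mathfrak{S}^D_n: D(w)=D(\alpha)\}|$.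 *)

theory Defs
  imports Main
begin

definition pm_set :: "nat \<Rightarrow> int set" where
  "pm_set n = {-int n..int n} - {0}"

text \<open>Signed permutations of [n]: bijections w of {+-1,...,+-n} with w(-i) = -w(i).
  To obtain a finite set of functions int => int, w is normalised to be the identity
  outside {+-1,...,+-n}.\<close>
definition signed_perms :: "nat \<Rightarrow> (int \<Rightarrow> int) set" where
  "signed_perms n = {w. bij_betw w (pm_set n) (pm_set n)
                        \<and> (\<forall>i\<in>pm_set n. w (-i) = - w i)
                        \<and> (\<forall>x. x \<notin> pm_set n \<longrightarrow> w x = x)}"

definition even_signed_perms :: "nat \<Rightarrow> (int \<Rightarrow> int) set" where
  "even_signed_perms n = {w \<in> signed_perms n. even (card {i\<in>{1..n}. w (int i) < 0})}"

definition wD :: "(int \<Rightarrow> int) \<Rightarrow> nat \<Rightarrow> int" where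
  "wD w i = (if i = 0 then - w 2 else w (int i))"

definition descD :: "nat \<Rightarrow> (int \<Rightarrow> int) \<Rightarrow> nat set" where
  "descD n w = {i \<in> {0..<n}. wD w i > wD w (i + 1)}"

definition pseudo_comp :: "nat \<Rightarrow> nat list \<Rightarrow> bool" where
  "pseudo_comp n \<alpha> \<longleftrightarrow> \<alpha> \<noteq> [] \<and> (\<forall>x\<in>set (tl \<alpha>). x > 0) \<and> sum_list \<alpha> = n"

definition Dcomp :: "nat list \<Rightarrow> nat set" where
  "Dcomp \<alpha> = {sum_list (take k \<alpha>) | k. 1 \<le> k \<and> k < length \<alpha>}"

definition ribbonD :: "nat \<Rightarrow> nat list \<Rightarrow> nat" where
  "ribbonD n \<alpha> = card {w \<in> even_signed_perms n. descD n w = Dcomp \<alpha>}"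

definition multinom :: "nat list \<Rightarrow> nat" where
  "multinom ks = fact (sum_list ks) div prod_list (map fact ks)"

definition nu :: "nat \<Rightarrow> nat list \<Rightarrow> nat" where
  "nu n \<beta> = (if hd \<beta> = 0 then 2 ^ (n - 1) * multinom \<beta>
             else if hd \<beta> = 1 then 2 ^ (n - 1) * multinom ((1 + hd (tl \<beta>)) # tl (tl \<beta>))
             else 2 ^ (n - hd \<beta>) * multinom \<beta>)"

end

theory Submission
  imports Defs
begin


definition Arr :: "int set \<Rightarrow> int list set" where
  "Arr U = {xs. distinct (map abs xs) \<and> abs ` set xs = U}"

lemma Arr_length: "xs \<in> Arr U \<Longrightarrow> length xs = card U"
  unfolding Arr_def using distinct_card[of "map abs xs"] by auto

lemma finite_Arr: assumes "finite U" shows "finite (Arr U)"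
proof -
  have "Arr U \<subseteq> {xs. set xs \<subseteq> (U \<union> uminus ` U) \<and> length xs = card U}"
  proof
    fix xs assume xs: "xs \<in> Arr U"
    have "set xs \<subseteq> U \<union> uminus ` U"
    proof
      fix x assume "x \<in> set xs"
      hence "abs x \<in> U" using xs by (auto simp: Arr_def)
      thus "x \<in> U \<union> uminus ` U"
        by (cases "x \<ge> 0") (auto intro!: rev_image_eqI[of "-x"])
    qed
    thus "xs \<in> {xs. set xs \<subseteq> (U \<union> uminus ` U) \<and> length xs = card U}"
      using Arr_length[OF xs] by auto
  qed
  moreover have "finite {xs. set xs \<subseteq> (U \<union> uminus ` U) \<and> length xs = card U}"
    using assms by (intro finite_lists_length_eq) auto
  ultimately show ?thesis by (rule finite_subset)
qed

definition sg :: "int set \<Rightarrow> int \<Rightarrow> int" where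
  "sg N a = (if a \<in> N then - a else a)"

lemma abs_sg: "a > 0 \<Longrightarrow> abs (sg N a) = a"
  by (simp add: sg_def)

lemma sorted_count:
  assumes fin: "finite A" and pos: "\<forall>a\<in>A. a > 0"
  shows "card {ys \<in> Arr A. sorted_wrt (<) ys \<and> R (set ys)} = card {N \<in> Pow A. R (sg N ` A)}"
proof -
  let ?f = "\<lambda>N. sorted_list_of_set (sg N ` A)"
  have absinj: "inj_on abs (sg N ` A)" for N
    using pos by (auto simp: inj_on_def abs_sg)
  have recN: "N = {a \<in> A. - a \<in> sg N ` A}" if "N \<subseteq> A" for N
  proof -
    have "- a \<in> sg N ` A \<longleftrightarrow> a \<in> N" if "a \<in> A" for a
    proof
      assume "- a \<in> sg N ` A"
      then obtain b where b: "b \<in> A" "- a = sg N b" by auto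
      have "a > 0" "b > 0" using pos that b(1) by auto
      thus "a \<in> N" using b by (cases "b \<in> N") (auto simp: sg_def)
    next
      assume "a \<in> N" thus "- a \<in> sg N ` A" using that by (auto simp: sg_def image_iff intro!: bexI[of _ a])
    qed
    thus ?thesis using \<open>N \<subseteq> A\<close> by auto
  qed
  have "bij_betw ?f {N \<in> Pow A. R (sg N ` A)} {ys \<in> Arr A. sorted_wrt (<) ys \<and> R (set ys)}"
  proof (rule bij_betwI')
    fix N M assume "N \<in> {N \<in> Pow A. R (sg N ` A)}" "M \<in> {N \<in> Pow A. R (sg N ` A)}"
    hence NM: "N \<subseteq> A" "M \<subseteq> A" by auto
    show "(?f N = ?f M) = (N = M)"
    proof
      assume "?f N = ?f M"
      hence "set (?f N) = set (?f M)" by simp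
      hence "sg N ` A = sg M ` A" using fin by simp
      thus "N = M" using recN[OF NM(1)] recN[OF NM(2)] by simp
    qed simp
  next
    fix N assume N: "N \<in> {N \<in> Pow A. R (sg N ` A)}"
    have s: "set (?f N) = sg N ` A" using fin by simp
    have "abs ` sg N ` A = (\<lambda>a. a) ` A" unfolding image_image
      by (rule image_cong) (use pos abs_sg in auto)
    hence "abs ` sg N ` A = A" by simp
    thus "?f N \<in> {ys \<in> Arr A. sorted_wrt (<) ys \<and> R (set ys)}"
      using N s absinj[of N] by (auto simp: Arr_def distinct_map)
  next
    fix ys assume ys: "ys \<in> {ys \<in> Arr A. sorted_wrt (<) ys \<and> R (set ys)}"
    define N where "N = {a \<in> A. - a \<in> set ys}"
    have inj: "inj_on abs (set ys)" and absys: "abs ` set ys = A"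
      using ys by (auto simp: Arr_def distinct_map)
    have "set ys = sg N ` A"
    proof
      show "set ys \<subseteq> sg N ` A"
      proof
        fix x assume x: "x \<in> set ys"
        hence a: "abs x \<in> A" using absys by auto
        show "x \<in> sg N ` A"
        proof (cases "x < 0")
          case True
          have "- x \<in> N" using a x True by (simp add: N_def)
          hence "x = sg N (- x)" by (simp add: sg_def)
          moreover have "- x \<in> A" using a True by simp
          ultimately show ?thesis by (rule image_eqI)
        next
          case False
          hence "x > 0" using a pos by fastforce
          have "- x \<notin> set ys"
          proof
            assume "- x \<in> set ys"
            hence "- x = x" using inj_onD[OF inj, of "-x" x] x by simp
            thus False using \<open>x > 0\<close> by simp
          qed
          hence "x \<notin> N" by (simp add: N_def)
          hence "x = sg N x" by (simp add: sg_def)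
          moreover have "x \<in> A" using a \<open>x > 0\<close> by simp
          ultimately show ?thesis by (rule image_eqI)
        qed
      qed
    next
      show "sg N ` A \<subseteq> set ys"
      proof
        fix y assume "y \<in> sg N ` A"
        then obtain a where a: "a \<in> A" "y = sg N a" by auto
        then obtain x where x: "x \<in> set ys" "abs x = a" using absys by auto
        show "y \<in> set ys"
        proof (cases "a \<in> N")
          case True thus ?thesis using a by (simp add: N_def sg_def)
        next
          case False
          have "x = a"
          proof (rule ccontr)
            assume "x \<noteq> a"
            hence "x = - a" using x(2) by (auto simp: abs_if split: if_splits)
            hence "a \<in> N" using x(1) a(1) by (simp add: N_def)
            thus False using False by simp
          qed
          thus ?thesis using x a False by (simp add: sg_def)
        qed
      qed
    qed
    hence "?f N = ys"
    proof -
      have "set (?f N) = set ys" using fin \<open>set ys = sg N ` A\<close> by simp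
      moreover have "sorted_wrt (<) (?f N)" by (rule strict_sorted_list_of_set)
      moreover have "sorted_wrt (<) ys" using ys by simp
      ultimately show ?thesis using strict_sorted_equal[of ys "?f N"] by simp
    qed
    moreover have "N \<in> {N \<in> Pow A. R (sg N ` A)}"
    proof -
      have "N \<subseteq> A" unfolding N_def by auto
      moreover have "R (sg N ` A)" using ys \<open>set ys = sg N ` A\<close> by simp
      ultimately show ?thesis by simp
    qed
    ultimately show "\<exists>N \<in> {N \<in> Pow A. R (sg N ` A)}. ys = ?f N" by blast
  qed
  thus ?thesis by (simp add: bij_betw_same_card)
qed


lemma Arr_append:
  assumes "ys \<in> Arr A" "zs \<in> Arr (U - A)" "A \<subseteq> U"
  shows "ys @ zs \<in> Arr U"
proof -
  have "set (map abs ys) = A" "set (map abs zs) = U - A" using assms by (auto simp: Arr_def)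
  hence "set (map abs ys) \<inter> set (map abs zs) = {}" by auto
  hence "distinct (map abs (ys @ zs))" using assms by (auto simp: Arr_def)
  moreover have "abs ` set (ys @ zs) = U" using assms by (auto simp: Arr_def)
  ultimately show ?thesis by (simp add: Arr_def)
qed

lemma Arr_take_drop:
  assumes xs: "xs \<in> Arr U" and k: "k \<le> length xs"
  shows "take k xs \<in> Arr (abs ` set (take k xs))"
    and "drop k xs \<in> Arr (U - abs ` set (take k xs))"
    and "card (abs ` set (take k xs)) = k"
    and "abs ` set (take k xs) \<subseteq> U"
proof -
  have me: "map abs xs = map abs (take k xs) @ map abs (drop k xs)"
    by (metis append_take_drop_id map_append)
  have d: "distinct (map abs (take k xs) @ map abs (drop k xs))"
    using xs me by (simp only: Arr_def mem_Collect_eq)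
  have se: "set xs = set (take k xs) \<union> set (drop k xs)"
    by (metis append_take_drop_id set_append)
  have U: "U = abs ` set (take k xs) \<union> abs ` set (drop k xs)"
    using xs se unfolding Arr_def by (simp add: image_Un)
  have disj: "abs ` set (take k xs) \<inter> abs ` set (drop k xs) = {}"
    using d unfolding distinct_append set_map by blast
  have d1: "distinct (map abs (take k xs))" and d2: "distinct (map abs (drop k xs))"
    using d unfolding distinct_append by blast+
  show "take k xs \<in> Arr (abs ` set (take k xs))" using d1 by (simp add: Arr_def)
  have "abs ` set (drop k xs) = U - abs ` set (take k xs)" using U disj by blast
  thus "drop k xs \<in> Arr (U - abs ` set (take k xs))"
    using d2 by (simp add: Arr_def)
  have "card (set (map abs (take k xs))) = length (map abs (take k xs))"
    using d1 by (intro distinct_card)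
  thus "card (abs ` set (take k xs)) = k" using k by simp
  show "abs ` set (take k xs) \<subseteq> U" using U by blast
qed

lemma split_count:
  assumes fin: "finite U" and k: "k \<le> card U"
  shows "card {xs \<in> Arr U. P (take k xs) \<and> Q (drop k xs)} =
    (\<Sum>A\<in>{A. A \<subseteq> U \<and> card A = k}. card {ys\<in>Arr A. P ys} * card {zs \<in> Arr (U - A). Q zs})"
proof -
  define K where "K = {A. A \<subseteq> U \<and> card A = k}"
  define S where "S A = (\<lambda>(ys,zs). ys @ zs) ` ({ys\<in>Arr A. P ys} \<times> {zs \<in> Arr (U - A). Q zs})" for A
  have eq: "{xs \<in> Arr U. P (take k xs) \<and> Q (drop k xs)} = (\<Union>A\<in>K. S A)"
  proof
    show "{xs \<in> Arr U. P (take k xs) \<and> Q (drop k xs)} \<subseteq> (\<Union>A\<in>K. S A)"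
    proof
      fix xs assume xs: "xs \<in> {xs \<in> Arr U. P (take k xs) \<and> Q (drop k xs)}"
      hence xA: "xs \<in> Arr U" by simp
      have kl: "k \<le> length xs" using Arr_length[OF xA] k by simp
      note td = Arr_take_drop[OF xA kl]
      have "abs ` set (take k xs) \<in> K" using td by (simp add: K_def)
      moreover have "xs \<in> S (abs ` set (take k xs))"
        unfolding S_def using td xs
        by (intro image_eqI[of _ _ "(take k xs, drop k xs)"]) auto
      ultimately show "xs \<in> (\<Union>A\<in>K. S A)" by blast
    qed
  next
    show "(\<Union>A\<in>K. S A) \<subseteq> {xs \<in> Arr U. P (take k xs) \<and> Q (drop k xs)}"
    proof
      fix xs assume "xs \<in> (\<Union>A\<in>K. S A)"
      then obtain A ys zs where A: "A \<in> K" and ys: "ys \<in> Arr A" "P ys"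
        and zs: "zs \<in> Arr (U - A)" "Q zs" and xs: "xs = ys @ zs"
        unfolding S_def by auto
      have "length ys = k" using Arr_length[OF ys(1)] A by (simp add: K_def)
      moreover have "ys @ zs \<in> Arr U" using Arr_append[OF ys(1) zs(1)] A by (simp add: K_def)
      ultimately show "xs \<in> {xs \<in> Arr U. P (take k xs) \<and> Q (drop k xs)}"
        using xs ys zs by simp
    qed
  qed
  have fK: "finite K"
  proof (rule finite_subset[of _ "Pow U"])
    show "K \<subseteq> Pow U" by (auto simp: K_def)
    show "finite (Pow U)" using fin by simp
  qed
  have finA: "finite A" if "A \<in> K" for A
  proof -
    have "A \<subseteq> U" using that by (simp add: K_def)
    thus ?thesis using fin by (rule finite_subset)
  qed
  have fS: "\<forall>A\<in>K. finite (S A)"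
  proof
    fix A assume "A \<in> K"
    have f1: "finite {ys\<in>Arr A. P ys}"
      by (rule finite_subset[OF _ finite_Arr[OF finA[OF \<open>A \<in> K\<close>]]]) blast
    have f2: "finite {zs\<in>Arr (U - A). Q zs}"
      by (rule finite_subset[OF _ finite_Arr]) (use fin in blast)+
    show "finite (S A)" unfolding S_def by (intro finite_imageI finite_cartesian_product f1 f2)
  qed
  have disj: "\<forall>A\<in>K. \<forall>B\<in>K. A \<noteq> B \<longrightarrow> S A \<inter> S B = {}"
  proof (intro ballI impI)
    fix A B assume AB: "A \<in> K" "B \<in> K" "A \<noteq> B"
    show "S A \<inter> S B = {}"
    proof (rule ccontr)
      assume "S A \<inter> S B \<noteq> {}"
      then obtain x where x: "x \<in> S A" "x \<in> S B" by blast
      from x(1) obtain ys zs where ys: "ys \<in> Arr A" and e1: "x = ys @ zs"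
        unfolding S_def by auto
      from x(2) obtain ys' zs' where ys': "ys' \<in> Arr B" and e2: "x = ys' @ zs'"
        unfolding S_def by auto
      have e: "ys @ zs = ys' @ zs'" using e1 e2 by simp
      have y: "ys \<in> Arr A" "ys' \<in> Arr B" using ys ys' by auto
      have "length ys = length ys'" using Arr_length[OF y(1)] Arr_length[OF y(2)] AB
        by (simp add: K_def)
      hence "ys = ys'" using e by simp
      hence "A = B" using y by (simp add: Arr_def)
      thus False using AB by simp
    qed
  qed
  have cS: "card (S A) = card {ys\<in>Arr A. P ys} * card {zs \<in> Arr (U - A). Q zs}" if "A \<in> K" for A
  proof -
    have "inj_on (\<lambda>(ys,zs). ys @ zs) ({ys\<in>Arr A. P ys} \<times> {zs \<in> Arr (U - A). Q zs})"
      by (auto simp: inj_on_def dest!: Arr_length)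
    thus ?thesis unfolding S_def by (simp add: card_image card_cartesian_product)
  qed
  have "card {xs \<in> Arr U. P (take k xs) \<and> Q (drop k xs)} = (\<Sum>A\<in>K. card (S A))"
    unfolding eq by (rule card_UN_disjoint[OF fK fS disj])
  also have "\<dots> = (\<Sum>A\<in>K. card {ys\<in>Arr A. P ys} * card {zs \<in> Arr (U - A). Q zs})"
    by (rule sum.cong) (simp_all add: cS)
  finally show ?thesis unfolding K_def .
qed


definition asc :: "nat set \<Rightarrow> int list \<Rightarrow> bool" where
  "asc S xs = (\<forall>i. Suc i < length xs \<longrightarrow> Suc i \<notin> S \<longrightarrow> xs ! i < xs ! Suc i)"

lemma asc_empty: "asc {} xs = sorted_wrt (<) xs"
  unfolding asc_def using sorted_wrt_iff_nth_Suc_transp[OF transp_on_less, of xs] by simp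

lemma asc_split:
  assumes k: "k \<le> length xs"
  shows "asc (insert k ((+) k ` S)) xs = (asc {} (take k xs) \<and> asc S (drop k xs))"
proof
  assume H: "asc (insert k ((+) k ` S)) xs"
  show "asc {} (take k xs) \<and> asc S (drop k xs)"
  proof
    show "asc {} (take k xs)" unfolding asc_def
    proof (intro allI impI)
      fix i assume i: "Suc i < length (take k xs)"
      hence "Suc i < length xs" "Suc i \<notin> insert k ((+) k ` S)" by auto
      hence "xs ! i < xs ! Suc i" using H by (simp add: asc_def)
      thus "take k xs ! i < take k xs ! Suc i" using i by simp
    qed
    show "asc S (drop k xs)" unfolding asc_def
    proof (intro allI impI)
      fix i assume i: "Suc i < length (drop k xs)" and iS: "Suc i \<notin> S"
      have "Suc (k + i) < length xs" using i by simp
      moreover have "Suc (k + i) \<notin> insert k ((+) k ` S)" using iS by auto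
      ultimately have "xs ! (k + i) < xs ! Suc (k + i)" using H by (simp add: asc_def)
      thus "drop k xs ! i < drop k xs ! Suc i" using k by simp
    qed
  qed
next
  assume H: "asc {} (take k xs) \<and> asc S (drop k xs)"
  show "asc (insert k ((+) k ` S)) xs" unfolding asc_def
  proof (intro allI impI)
    fix i assume i: "Suc i < length xs" and iS: "Suc i \<notin> insert k ((+) k ` S)"
    show "xs ! i < xs ! Suc i"
    proof (cases "Suc i < k")
      case True
      hence "take k xs ! i < take k xs ! Suc i" using H i by (simp add: asc_def)
      thus ?thesis using True by simp
    next
      case False
      hence ik: "k \<le> i" using iS by auto
      define j where "j = i - k"
      have ij: "i = k + j" using ik by (simp add: j_def)
      have "Suc j \<notin> S" using iS ij by auto
      moreover have "Suc j < length (drop k xs)" using i ij by simp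
      ultimately have "drop k xs ! j < drop k xs ! Suc j" using H by (simp add: asc_def)
      thus ?thesis using k ij by simp
    qed
  qed
qed

lemma asc_insert0: "asc (insert 0 S) xs = asc S xs"
  by (simp add: asc_def)

lemma Dcomp_Nil: "Dcomp [] = {}"
  by (simp add: Dcomp_def)

lemma Dcomp_Cons: "Dcomp (k # ks) = (if ks = [] then {} else insert k ((+) k ` Dcomp ks))"
proof (cases "ks = []")
  case True thus ?thesis by (simp add: Dcomp_def)
next
  case False
  have "Dcomp (k # ks) = insert k ((+) k ` Dcomp ks)"
  proof
    show "Dcomp (k # ks) \<subseteq> insert k ((+) k ` Dcomp ks)"
    proof
      fix x assume "x \<in> Dcomp (k # ks)"
      then obtain j where j: "1 \<le> j" "j < length (k # ks)" "x = sum_list (take j (k # ks))"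
        by (auto simp: Dcomp_def)
      show "x \<in> insert k ((+) k ` Dcomp ks)"
      proof (cases "j = 1")
        case True thus ?thesis using j by simp
      next
        case False
        then obtain j' where j': "j = Suc j'" "1 \<le> j'" using j by (cases j) auto
        have "sum_list (take j' ks) \<in> Dcomp ks" using j j' by (auto simp: Dcomp_def)
        moreover have "x = k + sum_list (take j' ks)" using j j' by simp
        ultimately show ?thesis by blast
      qed
    qed
  next
    show "insert k ((+) k ` Dcomp ks) \<subseteq> Dcomp (k # ks)"
    proof
      fix x assume "x \<in> insert k ((+) k ` Dcomp ks)"
      hence "x = k \<or> (\<exists>j. x = k + sum_list (take j ks) \<and> 1 \<le> j \<and> j < length ks)"
        by (auto simp: Dcomp_def)
      thus "x \<in> Dcomp (k # ks)"
      proof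
        assume "x = k"
        hence "x = sum_list (take 1 (k # ks)) \<and> 1 \<le> (1::nat) \<and> 1 < length (k # ks)"
          using False by simp
        thus ?thesis unfolding Dcomp_def by blast
      next
        assume "\<exists>j. x = k + sum_list (take j ks) \<and> 1 \<le> j \<and> j < length ks"
        then obtain j where j: "x = k + sum_list (take j ks)" "1 \<le> j" "j < length ks" by blast
        hence "x = sum_list (take (Suc j) (k # ks)) \<and> 1 \<le> Suc j \<and> Suc j < length (k # ks)"
          by simp
        thus ?thesis unfolding Dcomp_def by blast
      qed
    qed
  qed
  thus ?thesis using False by simp
qed

lemma Dcomp_Cons2: "Dcomp (a # b # ks) = insert a (Dcomp ((a + b) # ks))"
proof -
  have "(+) a ` insert b ((+) b ` Dcomp ks) = insert (a + b) ((+) (a + b) ` Dcomp ks)"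
    by (auto simp: image_image add.assoc)
  thus ?thesis by (simp add: Dcomp_Cons)
qed

lemma asc_Dcomp_Cons:
  assumes "length xs = k + sum_list ks"
  shows "asc (Dcomp (k # ks)) xs = (asc {} (take k xs) \<and> asc (Dcomp ks) (drop k xs))"
proof (cases "ks = []")
  case True
  hence "drop k xs = []" "take k xs = xs" using assms by auto
  thus ?thesis using True by (simp add: Dcomp_Cons Dcomp_Nil asc_def)
next
  case False
  thus ?thesis using asc_split[of k xs "Dcomp ks"] assms by (simp add: Dcomp_Cons)
qed

fun mn :: "nat list \<Rightarrow> nat" where
  "mn [] = 1"
| "mn (k # ks) = (k + sum_list ks choose k) * mn ks"

lemma mn_fact: "mn ks * prod_list (map fact ks) = fact (sum_list ks)"
proof (induction ks)
  case Nil thus ?case by simp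
next
  case (Cons k ks)
  have bf: "fact k * fact (k + sum_list ks - k) * (k + sum_list ks choose k) = (fact (k + sum_list ks) :: nat)"
    by (rule binomial_fact_lemma) simp
  have "mn (k # ks) * prod_list (map fact (k # ks)) =
      fact k * ((mn ks * prod_list (map fact ks)) * (k + sum_list ks choose k))"
    by (simp only: mn.simps list.map prod_list.Cons ac_simps)
  also have "\<dots> = fact (k + sum_list ks)" using Cons.IH bf
    by (simp add: ac_simps)
  finally show ?case by simp
qed

lemma multinom_mn: "multinom ks = mn ks"
proof -
  have "prod_list (map fact ks) > (0::nat)"
    by (induction ks) auto
  thus ?thesis unfolding multinom_def using mn_fact[of ks]
    by (metis nonzero_mult_div_cancel_right less_numeral_extra(3))
qed

lemma Arr_empty: "Arr {} = {[]}"
  by (auto simp: Arr_def)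

lemma sorted_Arr_count:
  assumes "finite A" "\<forall>a\<in>A. a > 0"
  shows "card {ys \<in> Arr A. asc {} ys} = 2 ^ card A"
proof -
  have "card {ys \<in> Arr A. asc {} ys} = card {ys \<in> Arr A. sorted_wrt (<) ys \<and> (\<lambda>_. True) (set ys)}"
    by (simp add: asc_empty)
  also have "\<dots> = card {N \<in> Pow A. (\<lambda>_. True) (sg N ` A)}"
    by (rule sorted_count[OF assms])
  also have "\<dots> = 2 ^ card A" using card_Pow[OF assms(1)] unfolding Pow_def by simp
  finally show ?thesis .
qed

lemma T_count:
  assumes "finite U" "\<forall>a\<in>U. a > 0" "sum_list ks = card U"
  shows "card {xs \<in> Arr U. asc (Dcomp ks) xs} = 2 ^ card U * mn ks"
  using assms
proof (induction ks arbitrary: U)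
  case Nil
  hence "U = {}" by simp
  moreover have "{xs. xs = [] \<and> asc (Dcomp []) xs} = {[]}" by (auto simp: asc_def)
  ultimately show ?case by (simp add: Arr_empty)
next
  case (Cons k ks)
  have kU: "k \<le> card U" using Cons.prems by simp
  have "{xs \<in> Arr U. asc (Dcomp (k # ks)) xs} =
        {xs \<in> Arr U. asc {} (take k xs) \<and> asc (Dcomp ks) (drop k xs)}"
    using asc_Dcomp_Cons Arr_length Cons.prems(3) by (metis (no_types, lifting) sum_list.Cons)
  hence "card {xs \<in> Arr U. asc (Dcomp (k # ks)) xs} =
    (\<Sum>A\<in>{A. A \<subseteq> U \<and> card A = k}. card {ys\<in>Arr A. asc {} ys} * card {zs \<in> Arr (U - A). asc (Dcomp ks) zs})"
    using split_count[OF Cons.prems(1) kU] by simp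
  also have "\<dots> = (\<Sum>A\<in>{A. A \<subseteq> U \<and> card A = k}. 2 ^ k * (2 ^ (card U - k) * mn ks))"
  proof (rule sum.cong[OF refl])
    fix A assume A: "A \<in> {A. A \<subseteq> U \<and> card A = k}"
    have fA: "finite A" using A Cons.prems(1) finite_subset by auto
    have "card {ys\<in>Arr A. asc {} ys} = 2 ^ k"
      using sorted_Arr_count[OF fA] A Cons.prems(2) by auto
    moreover have "card {zs \<in> Arr (U - A). asc (Dcomp ks) zs} = 2 ^ (card U - k) * mn ks"
    proof -
      have "card (U - A) = card U - k" using A fA by (simp add: card_Diff_subset)
      moreover have "sum_list ks = card (U - A)" using calculation Cons.prems(3) by simp
      ultimately show ?thesis using Cons.IH[of "U - A"] Cons.prems(1,2) by simp
    qed
    ultimately show "card {ys\<in>Arr A. asc {} ys} * card {zs \<in> Arr (U - A). asc (Dcomp ks) zs} =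
       2 ^ k * (2 ^ (card U - k) * mn ks)" by simp
  qed
  also have "\<dots> = (card U choose k) * (2 ^ k * (2 ^ (card U - k) * mn ks))"
    using n_subsets[OF Cons.prems(1)] by simp
  also have "\<dots> = 2 ^ card U * mn (k # ks)"
  proof -
    have "(2::nat) ^ k * 2 ^ (card U - k) = 2 ^ card U" using kU by (simp flip: power_add)
    moreover have "k + sum_list ks = card U" using Cons.prems(3) by simp
    ultimately show ?thesis by (simp add: algebra_simps)
  qed
  finally show ?case .
qed


definition PP :: "int set \<Rightarrow> bool" where
  "PP X = (\<forall>x\<in>X. \<forall>y\<in>X. x \<noteq> y \<longrightarrow> 0 < x + y)"

lemma PP_sorted:
  assumes s: "sorted_wrt (<) ys" and l: "2 \<le> length ys"
  shows "(- (ys ! 1) < ys ! 0) = PP (set ys)"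
proof
  assume H: "- (ys ! 1) < ys ! 0"
  show "PP (set ys)" unfolding PP_def
  proof (intro ballI impI)
    fix x y assume "x \<in> set ys" "y \<in> set ys" "x \<noteq> y"
    then obtain i j where ij: "i < length ys" "j < length ys" "x = ys ! i" "y = ys ! j" "i \<noteq> j"
      by (metis in_set_conv_nth)
    have le: "ys ! a \<le> ys ! b" if "a \<le> b" "b < length ys" for a b
      using sorted_wrt_nth_less[OF s, of a b] that by (cases "a = b") auto
    show "0 < x + y"
    proof (cases "i < j")
      case True
      have "ys ! 0 \<le> ys ! i" "ys ! 1 \<le> ys ! j" using le True ij by auto
      thus ?thesis using H ij by simp
    next
      case False
      hence "j < i" using ij by simp
      have "ys ! 0 \<le> ys ! j" "ys ! 1 \<le> ys ! i" using le \<open>j < i\<close> ij by auto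
      thus ?thesis using H ij by simp
    qed
  qed
next
  assume "PP (set ys)"
  moreover have "ys ! 0 \<in> set ys" "ys ! 1 \<in> set ys" using l by (auto intro!: nth_mem)
  moreover have "ys ! 0 < ys ! 1" using sorted_wrt_nth_less[OF s, of 0 1] l by simp
  ultimately have "0 < ys ! 0 + ys ! 1" unfolding PP_def by force
  thus "- (ys ! 1) < ys ! 0" by simp
qed

lemma PP_sg:
  assumes fin: "finite A" and pos: "\<forall>a\<in>A. a > 0" and N: "N \<subseteq> A" and ne: "A \<noteq> {}"
  shows "PP (sg N ` A) = (N \<subseteq> {Min A})"
proof
  assume H: "PP (sg N ` A)"
  show "N \<subseteq> {Min A}"
  proof
    fix a assume a: "a \<in> N"
    show "a \<in> {Min A}"
    proof (rule ccontr)
      assume "a \<notin> {Min A}"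
      hence am: "a \<noteq> Min A" by simp
      have mA: "Min A \<in> A" using fin ne by simp
      have aA: "a \<in> A" using a N by auto
      have "Min A \<le> a" using fin aA by simp
      hence lt: "Min A < a" using am by simp
      have "Min A > 0" using pos mA by auto
      have x: "sg N a = - a" using a by (simp add: sg_def)
      have a0: "a > 0" using pos aA by auto
      have "sg N (Min A) \<noteq> sg N a" using x am a0 \<open>Min A > 0\<close> by (auto simp: sg_def)
      hence "0 < sg N a + sg N (Min A)" using H aA mA unfolding PP_def by auto
      moreover have "sg N (Min A) \<le> Min A" by (simp add: sg_def \<open>Min A > 0\<close> less_imp_le)
      ultimately show False using x lt by simp
    qed
  qed
next
  assume H: "N \<subseteq> {Min A}"
  show "PP (sg N ` A)" unfolding PP_def
  proof (intro ballI impI)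
    fix x y assume "x \<in> sg N ` A" "y \<in> sg N ` A" and xy: "x \<noteq> y"
    then obtain a b where ab: "a \<in> A" "b \<in> A" "x = sg N a" "y = sg N b" by auto
    have "a \<noteq> b" using ab xy by auto
    have pa: "a > 0" "b > 0" using pos ab by auto
    have ma: "Min A \<le> a" "Min A \<le> b" using fin ab by auto
    show "0 < x + y"
    proof (cases "a \<in> N")
      case True
      hence "a = Min A" using H by auto
      hence "b \<notin> N" "Min A < b" using H \<open>a \<noteq> b\<close> ma by auto
      thus ?thesis using ab True \<open>a = Min A\<close> by (simp add: sg_def)
    next
      case False
      show ?thesis
      proof (cases "b \<in> N")
        case True
        hence "b = Min A" using H by auto
        hence "Min A < a" using \<open>a \<noteq> b\<close> ma by auto
        thus ?thesis using ab True False \<open>b = Min A\<close> by (simp add: sg_def)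
      next
        case False2: False
        thus ?thesis using ab False pa by (simp add: sg_def)
      qed
    qed
  qed
qed

lemma pair_count:
  assumes fin: "finite A" and pos: "\<forall>a\<in>A. a > 0" and c: "2 \<le> card A"
  shows "card {ys \<in> Arr A. asc {} ys \<and> - (ys ! 1) < ys ! 0} = 2"
proof -
  have ne: "A \<noteq> {}" using c by auto
  have "{ys \<in> Arr A. asc {} ys \<and> - (ys ! 1) < ys ! 0} = {ys \<in> Arr A. sorted_wrt (<) ys \<and> PP (set ys)}"
  proof (rule Collect_cong)
    fix ys
    show "(ys \<in> Arr A \<and> asc {} ys \<and> - (ys ! 1) < ys ! 0) = (ys \<in> Arr A \<and> sorted_wrt (<) ys \<and> PP (set ys))"
      using PP_sorted[of ys] Arr_length[of ys A] c by (auto simp: asc_empty)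
  qed
  hence "card {ys \<in> Arr A. asc {} ys \<and> - (ys ! 1) < ys ! 0} = card {N \<in> Pow A. PP (sg N ` A)}"
    using sorted_count[OF fin pos, of PP] by simp
  also have "{N \<in> Pow A. PP (sg N ` A)} = Pow {Min A}"
  proof -
    have "Min A \<in> A" using fin ne by simp
    thus ?thesis using PP_sg[OF fin pos _ ne] by auto
  qed
  finally show ?thesis by (simp add: card_Pow)
qed



definition Cw :: "nat set \<Rightarrow> int list \<Rightarrow> bool" where
  "Cw S xs = (asc S xs \<and> (0 \<notin> S \<longrightarrow> - (xs ! 1) < xs ! 0))"

lemma Dcomp_ge: "x \<in> Dcomp (k # ks) \<Longrightarrow> k \<le> x"
  by (auto simp: Dcomp_Cons split: if_splits)

definition nh :: "int list \<Rightarrow> int list" where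
  "nh xs = (case xs of [] \<Rightarrow> [] | x # r \<Rightarrow> (- x) # r)"

lemma nh_Cons[simp]: "nh (x # r) = (- x) # r"
  by (simp add: nh_def)

lemma nh_Nil[simp]: "nh [] = []"
  by (simp add: nh_def)

lemma nh_Arr: "xs \<in> Arr U \<Longrightarrow> nh xs \<in> Arr U"
  by (cases xs) (auto simp: Arr_def)

lemma nh_nh: "nh (nh xs) = xs"
  by (cases xs) auto

lemma Cw_nh:
  assumes l: "2 \<le> length xs" and S1: "1 \<notin> S'" and S0: "0 \<notin> S'"
  shows "Cw (insert 1 S') xs = asc S' (nh xs)"
proof -
  obtain x0 x1 r where xs: "xs = x0 # x1 # r" using l
    by (metis One_nat_def Suc_1 Suc_le_length_iff)
  have "asc S' (nh xs) = ((- x0 < x1) \<and> (\<forall>j. Suc (Suc j) < length xs \<longrightarrow> Suc (Suc j) \<notin> S' \<longrightarrow> xs ! Suc j < xs ! Suc (Suc j)))"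
    unfolding asc_def
  proof
    assume H: "\<forall>i. Suc i < length (nh xs) \<longrightarrow> Suc i \<notin> S' \<longrightarrow> nh xs ! i < nh xs ! Suc i"
    have "- x0 < x1" using H[rule_format, of 0] S1 xs by simp
    moreover have "\<forall>j. Suc (Suc j) < length xs \<longrightarrow> Suc (Suc j) \<notin> S' \<longrightarrow> xs ! Suc j < xs ! Suc (Suc j)"
    proof (intro allI impI)
      fix j assume "Suc (Suc j) < length xs" "Suc (Suc j) \<notin> S'"
      thus "xs ! Suc j < xs ! Suc (Suc j)" using H[rule_format, of "Suc j"] xs by simp
    qed
    ultimately show "(- x0 < x1) \<and> (\<forall>j. Suc (Suc j) < length xs \<longrightarrow> Suc (Suc j) \<notin> S' \<longrightarrow> xs ! Suc j < xs ! Suc (Suc j))" by blast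
  next
    assume H: "(- x0 < x1) \<and> (\<forall>j. Suc (Suc j) < length xs \<longrightarrow> Suc (Suc j) \<notin> S' \<longrightarrow> xs ! Suc j < xs ! Suc (Suc j))"
    show "\<forall>i. Suc i < length (nh xs) \<longrightarrow> Suc i \<notin> S' \<longrightarrow> nh xs ! i < nh xs ! Suc i"
    proof (intro allI impI)
      fix i assume i: "Suc i < length (nh xs)" "Suc i \<notin> S'"
      show "nh xs ! i < nh xs ! Suc i"
      proof (cases i)
        case 0 thus ?thesis using H xs by simp
      next
        case (Suc j)
        thus ?thesis using H i xs by auto
      qed
    qed
  qed
  moreover have "Cw (insert 1 S') xs = ((- x1 < x0) \<and> (\<forall>j. Suc (Suc j) < length xs \<longrightarrow> Suc (Suc j) \<notin> S' \<longrightarrow> xs ! Suc j < xs ! Suc (Suc j)))"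
    unfolding Cw_def asc_def
  proof
    assume H: "(\<forall>i. Suc i < length xs \<longrightarrow> Suc i \<notin> insert 1 S' \<longrightarrow> xs ! i < xs ! Suc i) \<and>
      (0 \<notin> insert 1 S' \<longrightarrow> - (xs ! 1) < xs ! 0)"
    thus "(- x1 < x0) \<and> (\<forall>j. Suc (Suc j) < length xs \<longrightarrow> Suc (Suc j) \<notin> S' \<longrightarrow> xs ! Suc j < xs ! Suc (Suc j))"
      using S0 xs by auto
  next
    assume H: "(- x1 < x0) \<and> (\<forall>j. Suc (Suc j) < length xs \<longrightarrow> Suc (Suc j) \<notin> S' \<longrightarrow> xs ! Suc j < xs ! Suc (Suc j))"
    show "(\<forall>i. Suc i < length xs \<longrightarrow> Suc i \<notin> insert 1 S' \<longrightarrow> xs ! i < xs ! Suc i) \<and>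
      (0 \<notin> insert 1 S' \<longrightarrow> - (xs ! 1) < xs ! 0)"
    proof
      show "\<forall>i. Suc i < length xs \<longrightarrow> Suc i \<notin> insert 1 S' \<longrightarrow> xs ! i < xs ! Suc i"
      proof (intro allI impI)
        fix i assume i: "Suc i < length xs" "Suc i \<notin> insert 1 S'"
        then obtain j where "i = Suc j" by (cases i) auto
        thus "xs ! i < xs ! Suc i" using H i by auto
      qed
      show "0 \<notin> insert 1 S' \<longrightarrow> - (xs ! 1) < xs ! 0" using H xs by simp
    qed
  qed
  ultimately show ?thesis by auto
qed

lemma card_U: "card {1..int n} = n"
  by simp

lemma G_nu:
  assumes n: "2 \<le> n" and pc: "pseudo_comp n \<beta>"
  shows "card {xs \<in> Arr {1..int n}. Cw (Dcomp \<beta>) xs} = 2 * nu n \<beta>"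
proof -
  define U where "U = {1..int n}"
  have fU: "finite U" and pU: "\<forall>a\<in>U. a > 0" and cU: "card U = n" by (auto simp: U_def)
  obtain k ks where \<beta>: "\<beta> = k # ks" using pc by (cases \<beta>) (auto simp: pseudo_comp_def)
  have sum: "k + sum_list ks = n" and pos: "\<forall>x\<in>set ks. x > 0"
    using pc \<beta> by (auto simp: pseudo_comp_def)
  have lenU: "xs \<in> Arr U \<Longrightarrow> length xs = n" for xs using Arr_length cU by metis
  consider "k = 0" | "k = 1" | "k \<ge> 2" by linarith
  then have main: "card {xs \<in> Arr U. Cw (Dcomp \<beta>) xs} = 2 * nu n \<beta>"
  proof cases
    case 1
    have "ks \<noteq> []" using sum n 1 by auto
    hence D: "Dcomp \<beta> = insert 0 (Dcomp ks)" using \<beta> 1 by (simp add: Dcomp_Cons)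
    have "{xs \<in> Arr U. Cw (Dcomp \<beta>) xs} = {xs \<in> Arr U. asc (Dcomp ks) xs}"
      by (simp add: D Cw_def asc_insert0)
    hence "card {xs \<in> Arr U. Cw (Dcomp \<beta>) xs} = 2 ^ n * mn ks"
      using T_count[OF fU pU, of ks] sum 1 cU by simp
    moreover have "nu n \<beta> = 2 ^ (n - 1) * mn ks" using \<beta> 1 by (simp add: nu_def multinom_mn)
    moreover have "(2::nat) ^ n = 2 * 2 ^ (n - 1)" using n by (cases n) auto
    ultimately show ?thesis by simp
  next
    case 2
    have "ks \<noteq> []" using sum n 2 by auto
    then obtain b ks' where ks: "ks = b # ks'" by (cases ks) auto
    have b: "b > 0" using pos ks by simp
    define S' where "S' = Dcomp ((1 + b) # ks')"
    have D: "Dcomp \<beta> = insert 1 S'" using \<beta> 2 ks by (simp add: S'_def Dcomp_Cons2)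
    have S'ge: "x \<in> S' \<Longrightarrow> 1 + b \<le> x" for x unfolding S'_def by (rule Dcomp_ge)
    have S1: "1 \<notin> S'" and S0: "0 \<notin> S'" using S'ge b by force+
    have "bij_betw nh {xs \<in> Arr U. Cw (Dcomp \<beta>) xs} {xs \<in> Arr U. asc S' xs}"
    proof (rule bij_betw_byWitness[where f' = nh])
      show "nh ` {xs \<in> Arr U. Cw (Dcomp \<beta>) xs} \<subseteq> {xs \<in> Arr U. asc S' xs}"
        using Cw_nh[OF _ S1 S0] lenU n nh_Arr by (auto simp: D)
      show "nh ` {xs \<in> Arr U. asc S' xs} \<subseteq> {xs \<in> Arr U. Cw (Dcomp \<beta>) xs}"
      proof
        fix ys assume "ys \<in> nh ` {xs \<in> Arr U. asc S' xs}"
        then obtain xs where xs: "xs \<in> {xs \<in> Arr U. asc S' xs}" and ys: "ys = nh xs" by auto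
        have "nh xs \<in> Arr U" using xs nh_Arr by auto
        moreover have "length (nh xs) = n" using calculation lenU by auto
        moreover have "asc S' (nh (nh xs))" using xs by (simp add: nh_nh)
        ultimately show "ys \<in> {xs \<in> Arr U. Cw (Dcomp \<beta>) xs}"
          using Cw_nh[OF _ S1 S0, of "nh xs"] n ys by (simp add: D)
      qed
    qed (simp_all add: nh_nh)
    hence "card {xs \<in> Arr U. Cw (Dcomp \<beta>) xs} = card {xs \<in> Arr U. asc S' xs}"
      by (rule bij_betw_same_card)
    also have "\<dots> = 2 ^ n * mn ((1 + b) # ks')"
      unfolding S'_def using T_count[OF fU pU, of "(1 + b) # ks'"] sum 2 ks cU by simp
    finally have "card {xs \<in> Arr U. Cw (Dcomp \<beta>) xs} = 2 ^ n * mn ((1 + b) # ks')" .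
    moreover have "nu n \<beta> = 2 ^ (n - 1) * mn ((1 + b) # ks')"
      using \<beta> 2 ks by (simp add: nu_def multinom_mn)
    moreover have "(2::nat) ^ n = 2 * 2 ^ (n - 1)" using n by (cases n) auto
    ultimately show ?thesis by simp
  next
    case 3
    have kn: "k \<le> card U" using sum cU by simp
    have S0: "0 \<notin> Dcomp \<beta>" using Dcomp_ge[of 0 k ks] 3 \<beta> by auto
    have "{xs \<in> Arr U. Cw (Dcomp \<beta>) xs} =
      {xs \<in> Arr U. (asc {} (take k xs) \<and> - (take k xs ! 1) < take k xs ! 0) \<and> asc (Dcomp ks) (drop k xs)}"
    proof (rule Collect_cong)
      fix xs
      show "(xs \<in> Arr U \<and> Cw (Dcomp \<beta>) xs) =
        (xs \<in> Arr U \<and> (asc {} (take k xs) \<and> - (take k xs ! 1) < take k xs ! 0) \<and> asc (Dcomp ks) (drop k xs))"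
        using asc_Dcomp_Cons[of xs k ks] lenU[of xs] sum 3 S0 \<beta> by (auto simp: Cw_def)
    qed
    hence "card {xs \<in> Arr U. Cw (Dcomp \<beta>) xs} =
      (\<Sum>A\<in>{A. A \<subseteq> U \<and> card A = k}. card {ys\<in>Arr A. asc {} ys \<and> - (ys ! 1) < ys ! 0} *
          card {zs \<in> Arr (U - A). asc (Dcomp ks) zs})"
      using split_count[OF fU kn, of "\<lambda>ys. asc {} ys \<and> - (ys ! 1) < ys ! 0" "asc (Dcomp ks)"] by simp
    also have "\<dots> = (\<Sum>A\<in>{A. A \<subseteq> U \<and> card A = k}. 2 * (2 ^ (n - k) * mn ks))"
    proof (rule sum.cong[OF refl])
      fix A assume A: "A \<in> {A. A \<subseteq> U \<and> card A = k}"
      have fA: "finite A" using A fU finite_subset by auto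
      have "card {ys\<in>Arr A. asc {} ys \<and> - (ys ! 1) < ys ! 0} = 2"
        using pair_count[OF fA] A pU 3 by auto
      moreover have "card {zs \<in> Arr (U - A). asc (Dcomp ks) zs} = 2 ^ (n - k) * mn ks"
      proof -
        have "card (U - A) = n - k" using A fA cU by (simp add: card_Diff_subset)
        moreover have "sum_list ks = card (U - A)" using calculation sum by simp
        ultimately show ?thesis using T_count[of "U - A" ks] fU pU by simp
      qed
      ultimately show "card {ys\<in>Arr A. asc {} ys \<and> - (ys ! 1) < ys ! 0} *
          card {zs \<in> Arr (U - A). asc (Dcomp ks) zs} = 2 * (2 ^ (n - k) * mn ks)" by simp
    qed
    also have "\<dots> = (n choose k) * (2 * (2 ^ (n - k) * mn ks))"
      using n_subsets[OF fU] cU by simp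
    also have "\<dots> = 2 * nu n \<beta>"
      using \<beta> 3 sum by (simp add: nu_def multinom_mn)
    finally show ?thesis .
  qed
  thus ?thesis by (simp add: U_def)
qed



definition word :: "nat \<Rightarrow> (int \<Rightarrow> int) \<Rightarrow> int list" where
  "word n w = map (\<lambda>i. w (int i)) [1..<Suc n]"

lemma word_length[simp]: "length (word n w) = n"
  by (simp add: word_def)

lemma word_nth: "i < n \<Longrightarrow> word n w ! i = w (int (Suc i))"
  by (simp add: word_def nth_upt del: upt_Suc)

lemma pm_set_iff: "x \<in> pm_set n \<longleftrightarrow> x \<noteq> 0 \<and> \<bar>x\<bar> \<le> int n"
  by (auto simp: pm_set_def)

lemma SP_odd: "w \<in> signed_perms n \<Longrightarrow> w (- x) = - w x"
proof -
  assume w: "w \<in> signed_perms n"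
  show ?thesis
  proof (cases "x \<in> pm_set n")
    case True thus ?thesis using w by (simp add: signed_perms_def)
  next
    case False
    hence "- x \<notin> pm_set n" by (simp add: pm_set_iff)
    thus ?thesis using w False by (simp add: signed_perms_def)
  qed
qed

lemma word_distinct:
  assumes w: "w \<in> signed_perms n" and ij: "i < n" "j < n" "i \<noteq> j"
  shows "\<bar>word n w ! i\<bar> \<noteq> \<bar>word n w ! j\<bar>"
proof
  assume H: "\<bar>word n w ! i\<bar> = \<bar>word n w ! j\<bar>"
  have inj: "inj_on w (pm_set n)" using w by (simp add: signed_perms_def bij_betw_def)
  have Pi: "int (Suc i) \<in> pm_set n" "int (Suc j) \<in> pm_set n" "- int (Suc j) \<in> pm_set n"
    using ij by (auto simp: pm_set_iff)
  have "w (int (Suc i)) = w (int (Suc j)) \<or> w (int (Suc i)) = w (- int (Suc j))"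
    using H ij SP_odd[OF w, of "int (Suc j)"] by (auto simp: word_nth abs_if split: if_splits)
  thus False
  proof
    assume "w (int (Suc i)) = w (int (Suc j))"
    hence "int (Suc i) = int (Suc j)" using inj Pi by (auto dest: inj_onD)
    thus False using ij by simp
  next
    assume "w (int (Suc i)) = w (- int (Suc j))"
    hence "int (Suc i) = - int (Suc j)" using inj Pi by (auto dest: inj_onD)
    thus False by simp
  qed
qed

lemma word_Arr:
  assumes w: "w \<in> signed_perms n"
  shows "word n w \<in> Arr {1..int n}"
proof -
  have d: "distinct (map abs (word n w))"
    unfolding distinct_conv_nth using word_distinct[OF w] by simp
  have img: "w ` pm_set n = pm_set n" using w by (simp add: signed_perms_def bij_betw_def)
  have "abs ` set (word n w) = {1..int n}"
  proof
    show "abs ` set (word n w) \<subseteq> {1..int n}"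
    proof
      fix y assume "y \<in> abs ` set (word n w)"
      then obtain i where i: "i < n" "y = \<bar>word n w ! i\<bar>" by (auto simp: in_set_conv_nth)
      have "int (Suc i) \<in> pm_set n" using i by (auto simp: pm_set_iff)
      hence "w (int (Suc i)) \<in> pm_set n" using img by blast
      thus "y \<in> {1..int n}" using i by (auto simp: word_nth pm_set_iff)
    qed
  next
    show "{1..int n} \<subseteq> abs ` set (word n w)"
    proof
      fix m assume m: "m \<in> {1..int n}"
      hence "m \<in> pm_set n" by (auto simp: pm_set_iff)
      then obtain x where x: "x \<in> pm_set n" "m = w x" using img by blast
      define i where "i = nat \<bar>x\<bar> - 1"
      have i: "i < n" "int (Suc i) = \<bar>x\<bar>" using x by (auto simp: i_def pm_set_iff)
      have "\<bar>w (int (Suc i))\<bar> = m"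
      proof (cases "x > 0")
        case True thus ?thesis using i x m by simp
      next
        case False
        hence "int (Suc i) = - x" using i by simp
        thus ?thesis using SP_odd[OF w, of x] x m by simp
      qed
      hence "m = \<bar>word n w ! i\<bar>" using i by (simp add: word_nth)
      moreover have "word n w ! i \<in> set (word n w)" using i by (intro nth_mem) simp
      ultimately show "m \<in> abs ` set (word n w)" by blast
    qed
  qed
  thus ?thesis using d by (simp add: Arr_def)
qed

lemma word_inj: "inj_on (word n) (signed_perms n)"
proof (rule inj_onI)
  fix w1 w2 assume w1: "w1 \<in> signed_perms n" and w2: "w2 \<in> signed_perms n" and e: "word n w1 = word n w2"
  have pos: "w1 (int (Suc i)) = w2 (int (Suc i))" if "i < n" for i
    using e that word_nth by metis
  show "w1 = w2"
  proof
    fix x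
    show "w1 x = w2 x"
    proof (cases "x \<in> pm_set n")
      case False thus ?thesis using w1 w2 by (simp add: signed_perms_def)
    next
      case True
      define i where "i = nat \<bar>x\<bar> - 1"
      have i: "i < n" "int (Suc i) = \<bar>x\<bar>" using True by (auto simp: i_def pm_set_iff)
      show ?thesis
      proof (cases "x > 0")
        case True thus ?thesis using i pos[of i] by simp
      next
        case False
        hence xi: "x = - int (Suc i)" using i by simp
        have "w1 (- int (Suc i)) = - w1 (int (Suc i))" "w2 (- int (Suc i)) = - w2 (int (Suc i))"
          by (rule SP_odd[OF w1], rule SP_odd[OF w2])
        thus ?thesis using pos[OF i(1)] xi by simp
      qed
    qed
  qed
qed

lemma word_surj:
  assumes xs: "xs \<in> Arr {1..int n}"
  shows "\<exists>w \<in> signed_perms n. word n w = xs"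
proof -
  have len: "length xs = n" using Arr_length[OF xs] by simp
  have dist: "distinct (map abs xs)" and av: "abs ` set xs = {1..int n}" using xs by (auto simp: Arr_def)
  have xin: "1 \<le> \<bar>xs ! k\<bar> \<and> \<bar>xs ! k\<bar> \<le> int n" if "k < n" for k
    using av that len by (auto simp: image_iff nth_mem) (metis atLeastAtMost_iff image_eqI nth_mem)+
  define v where "v k = xs ! (nat \<bar>k\<bar> - 1)" for k
  define w where "w x = (if x \<in> pm_set n then (if x > 0 then v x else - v x) else x)" for x
  have vP: "v x \<in> pm_set n" "- v x \<in> pm_set n" if "x \<in> pm_set n" for x
  proof -
    have "nat \<bar>x\<bar> - 1 < n" using that by (auto simp: pm_set_iff)
    thus "v x \<in> pm_set n" "- v x \<in> pm_set n" using xin[of "nat \<bar>x\<bar> - 1"] by (auto simp: v_def pm_set_iff)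
  qed
  have v0: "v x \<noteq> 0" if "x \<in> pm_set n" for x using vP[OF that] by (simp add: pm_set_iff)
  have sub: "w ` pm_set n \<subseteq> pm_set n" using vP by (auto simp: w_def)
  have inj: "inj_on w (pm_set n)"
  proof (rule inj_onI)
    fix x y assume x: "x \<in> pm_set n" and y: "y \<in> pm_set n" and e: "w x = w y"
    have ax: "\<bar>w x\<bar> = \<bar>v x\<bar>" "\<bar>w y\<bar> = \<bar>v y\<bar>" using x y by (auto simp: w_def)
    have kx: "nat \<bar>x\<bar> - 1 < n" "nat \<bar>y\<bar> - 1 < n" using x y by (auto simp: pm_set_iff)
    have "map abs xs ! (nat \<bar>x\<bar> - 1) = map abs xs ! (nat \<bar>y\<bar> - 1)"
      using e ax kx len by (simp add: v_def)
    hence h: "nat \<bar>x\<bar> - 1 = nat \<bar>y\<bar> - 1" using nth_eq_iff_index_eq[OF dist] kx len by simp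
    have "0 < nat \<bar>x\<bar>" "0 < nat \<bar>y\<bar>" using x y by (auto simp: pm_set_iff)
    hence "nat \<bar>x\<bar> = nat \<bar>y\<bar>" using h by linarith
    hence axy: "\<bar>x\<bar> = \<bar>y\<bar>" by (simp add: eq_nat_nat_iff)
    hence vxy: "v x = v y" by (simp add: v_def)
    show "x = y"
    proof (rule ccontr)
      assume "x \<noteq> y"
      hence "x = - y" using axy by (auto simp: abs_if split: if_splits)
      moreover have "x \<noteq> 0" using x by (simp add: pm_set_iff)
      ultimately have "v x = - v x" using e x y vxy by (auto simp: w_def split: if_splits)
      thus False using v0[OF x] by simp
    qed
  qed
  have "w \<in> signed_perms n"
  proof -
    have "bij_betw w (pm_set n) (pm_set n)"
      unfolding bij_betw_def using inj endo_inj_surj[OF _ sub inj] by (simp add: pm_set_def)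
    moreover have "\<forall>i\<in>pm_set n. w (- i) = - w i"
    proof
      fix i assume i: "i \<in> pm_set n"
      hence "- i \<in> pm_set n" by (simp add: pm_set_iff)
      moreover have "v (- i) = v i" by (simp add: v_def)
      ultimately show "w (- i) = - w i" using i by (auto simp: w_def pm_set_iff)
    qed
    moreover have "\<forall>x. x \<notin> pm_set n \<longrightarrow> w x = x" by (simp add: w_def)
    ultimately show ?thesis by (simp add: signed_perms_def)
  qed
  moreover have "word n w = xs"
  proof (rule nth_equalityI)
    show "length (word n w) = length xs" using len by simp
    fix i assume "i < length (word n w)"
    hence i: "i < n" by simp
    have "int (Suc i) \<in> pm_set n" using i by (simp add: pm_set_iff)
    moreover have "nat (1 + int i) = Suc i" using nat_int[of "Suc i"] by simp
    ultimately show "word n w ! i = xs ! i" using i by (simp add: word_nth w_def v_def)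
  qed
  ultimately show ?thesis by blast
qed

lemma word_bij: "bij_betw (word n) (signed_perms n) (Arr {1..int n})"
  unfolding bij_betw_def
proof
  show "inj_on (word n) (signed_perms n)" by (rule word_inj)
  show "word n ` signed_perms n = Arr {1..int n}"
    using word_Arr word_surj by blast
qed



lemma descD_Cw:
  assumes n: "2 \<le> n" and w: "w \<in> signed_perms n"
  shows "(descD n w \<subseteq> S) = Cw S (word n w)"
proof -
  let ?x = "word n w"
  have dist: "\<bar>?x ! i\<bar> \<noteq> \<bar>?x ! j\<bar>" if "i < n" "j < n" "i \<noteq> j" for i j
    using word_distinct[OF w that] .
  have x1: "?x ! 1 = w 2" using word_nth[of 1 n w] n by simp
  have wd0: "wD w 0 = - (?x ! 1)" using x1 by (simp add: wD_def)
  have wdS: "wD w (Suc i) = ?x ! i" if "i < n" for i using that by (simp add: wD_def word_nth)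
  have e0: "(\<not> wD w 1 < wD w 0) = (- (?x ! 1) < ?x ! 0)"
  proof -
    have "\<bar>?x ! 0\<bar> \<noteq> \<bar>?x ! 1\<bar>" using dist[of 0 1] n by simp
    hence "?x ! 0 \<noteq> - (?x ! 1)" by auto
    moreover have "wD w 1 = ?x ! 0" using wdS[of 0] n by simp
    ultimately show ?thesis using wd0 by auto
  qed
  have ej: "(\<not> wD w (Suc j + 1) < wD w (Suc j)) = (?x ! j < ?x ! Suc j)" if "Suc j < n" for j
  proof -
    have "?x ! j \<noteq> ?x ! Suc j" using dist[of j "Suc j"] that by auto
    thus ?thesis using wdS[of j] wdS[of "Suc j"] that by auto
  qed
  have "(descD n w \<subseteq> S) = (\<forall>i<n. i \<notin> S \<longrightarrow> \<not> wD w (i + 1) < wD w i)"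
    by (auto simp: descD_def)
  also have "\<dots> = ((0 \<notin> S \<longrightarrow> \<not> wD w 1 < wD w 0) \<and>
      (\<forall>j. Suc j < n \<longrightarrow> Suc j \<notin> S \<longrightarrow> \<not> wD w (Suc j + 1) < wD w (Suc j)))"
  proof
    assume H: "\<forall>i<n. i \<notin> S \<longrightarrow> \<not> wD w (i + 1) < wD w i"
    show "(0 \<notin> S \<longrightarrow> \<not> wD w 1 < wD w 0) \<and>
      (\<forall>j. Suc j < n \<longrightarrow> Suc j \<notin> S \<longrightarrow> \<not> wD w (Suc j + 1) < wD w (Suc j))"
      using H[rule_format, of 0] n H by auto
  next
    assume H: "(0 \<notin> S \<longrightarrow> \<not> wD w 1 < wD w 0) \<and>
      (\<forall>j. Suc j < n \<longrightarrow> Suc j \<notin> S \<longrightarrow> \<not> wD w (Suc j + 1) < wD w (Suc j))"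
    show "\<forall>i<n. i \<notin> S \<longrightarrow> \<not> wD w (i + 1) < wD w i"
    proof (intro allI impI)
      fix i assume i: "i < n" "i \<notin> S"
      show "\<not> wD w (i + 1) < wD w i"
      proof (cases i)
        case 0 thus ?thesis using H i by simp
      next
        case (Suc j) thus ?thesis using H i by simp
      qed
    qed
  qed
  also have "\<dots> = Cw S ?x"
    unfolding Cw_def asc_def using e0 ej by auto
  finally show ?thesis .
qed

definition negc :: "int list \<Rightarrow> nat" where
  "negc xs = card {i. i < length xs \<and> xs ! i < 0}"

lemma negc_word: "card {i \<in> {1..n}. w (int i) < 0} = negc (word n w)"
proof -
  have "{i \<in> {1..n}. w (int i) < 0} = Suc ` {i. i < n \<and> word n w ! i < 0}"
  proof
    show "{i \<in> {1..n}. w (int i) < 0} \<subseteq> Suc ` {i. i < n \<and> word n w ! i < 0}"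
    proof
      fix i assume i: "i \<in> {i \<in> {1..n}. w (int i) < 0}"
      then obtain j where j: "i = Suc j" by (cases i) auto
      have "j < n \<and> word n w ! j < 0" using i j by (simp add: word_nth)
      thus "i \<in> Suc ` {i. i < n \<and> word n w ! i < 0}" using j by blast
    qed
  next
    show "Suc ` {i. i < n \<and> word n w ! i < 0} \<subseteq> {i \<in> {1..n}. w (int i) < 0}"
      by (auto simp: word_nth)
  qed
  thus ?thesis by (simp add: negc_def card_image)
qed

lemma card_bij_Collect:
  assumes f: "bij_betw f A B" and PQ: "\<And>x. x \<in> A \<Longrightarrow> P x = Q (f x)"
  shows "card {x \<in> A. P x} = card {y \<in> B. Q y}"
proof -
  have "f ` {x \<in> A. P x} = {y \<in> B. Q y}"
  proof
    show "f ` {x \<in> A. P x} \<subseteq> {y \<in> B. Q y}" using f PQ by (auto simp: bij_betw_def)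
    show "{y \<in> B. Q y} \<subseteq> f ` {x \<in> A. P x}"
    proof
      fix y assume y: "y \<in> {y \<in> B. Q y}"
      then obtain x where "x \<in> A" "y = f x" using f by (auto simp: bij_betw_def)
      thus "y \<in> f ` {x \<in> A. P x}" using y PQ by auto
    qed
  qed
  moreover have "bij_betw f {x \<in> A. P x} (f ` {x \<in> A. P x})"
    by (rule bij_betw_subset[OF f]) auto
  ultimately show ?thesis by (metis bij_betw_same_card)
qed

lemma g_word:
  assumes n: "2 \<le> n"
  shows "card {w \<in> even_signed_perms n. descD n w \<subseteq> S} =
         card {xs \<in> Arr {1..int n}. even (negc xs) \<and> Cw S xs}"
proof -
  have "{w \<in> even_signed_perms n. descD n w \<subseteq> S} =
        {w \<in> signed_perms n. even (card {i \<in> {1..n}. w (int i) < 0}) \<and> descD n w \<subseteq> S}"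
    by (auto simp: even_signed_perms_def)
  also have "card \<dots> = card {xs \<in> Arr {1..int n}. even (negc xs) \<and> Cw S xs}"
  proof (rule card_bij_Collect[OF word_bij])
    fix w assume w: "w \<in> signed_perms n"
    have "card {i \<in> {1..n}. w (int i) < 0} = negc (word n w)" by (rule negc_word)
    thus "(even (card {i \<in> {1..n}. w (int i) < 0}) \<and> descD n w \<subseteq> S) =
      (even (negc (word n w)) \<and> Cw S (word n w))" using descD_Cw[OF n w] by simp
  qed
  finally show ?thesis .
qed

definition phi :: "int \<Rightarrow> int" where
  "phi x = (if \<bar>x\<bar> = 1 then - x else x)"

definition flip1 :: "int list \<Rightarrow> int list" where
  "flip1 xs = map phi xs"

lemma phi_mono: "a \<noteq> 0 \<Longrightarrow> b \<noteq> 0 \<Longrightarrow> \<bar>a\<bar> \<noteq> \<bar>b\<bar> \<Longrightarrow> (phi a < phi b) = (a < b)"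
  by (auto simp: phi_def abs_if split: if_splits)

lemma phi_neg: "phi (- a) = - phi a"
  by (simp add: phi_def)

lemma abs_phi: "\<bar>phi a\<bar> = \<bar>a\<bar>"
  by (simp add: phi_def)

lemma flip_Arr: "xs \<in> Arr U \<Longrightarrow> flip1 xs \<in> Arr U"
proof -
  assume "xs \<in> Arr U"
  moreover have "map abs (flip1 xs) = map abs xs" by (simp add: flip1_def abs_phi)
  moreover have "abs ` set (flip1 xs) = abs ` set xs"
    using arg_cong[OF calculation(2), of set] by simp
  ultimately show ?thesis by (simp add: Arr_def)
qed

lemma flip_flip: "flip1 (flip1 xs) = xs"
  by (induction xs) (auto simp: flip1_def phi_def)

lemma Arr_facts:
  assumes xs: "xs \<in> Arr U" and pos: "\<forall>a\<in>U. a > 0"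
  shows "i < length xs \<Longrightarrow> xs ! i \<noteq> 0"
    and "i < length xs \<Longrightarrow> j < length xs \<Longrightarrow> i \<noteq> j \<Longrightarrow> \<bar>xs ! i\<bar> \<noteq> \<bar>xs ! j\<bar>"
proof -
  assume i: "i < length xs"
  hence "\<bar>xs ! i\<bar> \<in> U" using xs by (auto simp: Arr_def)
  thus "xs ! i \<noteq> 0" using pos by fastforce
next
  assume "i < length xs" "j < length xs" "i \<noteq> j"
  thus "\<bar>xs ! i\<bar> \<noteq> \<bar>xs ! j\<bar>"
    using xs nth_eq_iff_index_eq[of "map abs xs" i j] by (auto simp: Arr_def)
qed

lemma flip_Cw:
  assumes xs: "xs \<in> Arr U" and pos: "\<forall>a\<in>U. a > 0" and l: "2 \<le> length xs"
  shows "Cw S (flip1 xs) = Cw S xs"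
proof -
  note F = Arr_facts[OF xs pos]
  have fn: "flip1 xs ! i = phi (xs ! i)" if "i < length xs" for i using that by (simp add: flip1_def)
  have a: "asc S (flip1 xs) = asc S xs"
    unfolding asc_def using F fn by (auto simp: flip1_def phi_mono)
  have "flip1 xs ! 0 = phi (xs ! 0)" using fn[of 0] l by linarith
  moreover have "flip1 xs ! 1 = phi (xs ! 1)" using fn[of 1] l by linarith
  ultimately have "(- (flip1 xs ! 1) < flip1 xs ! 0) = (phi (- (xs ! 1)) < phi (xs ! 0))"
    by (simp add: phi_neg)
  also have "\<dots> = (- (xs ! 1) < xs ! 0)"
  proof -
    have "0 < length xs" "1 < length xs" using l by linarith+
    hence "xs ! 0 \<noteq> 0" "xs ! 1 \<noteq> 0" "\<bar>xs ! 0\<bar> \<noteq> \<bar>xs ! 1\<bar>"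
      using F(1)[of 0] F(1)[of 1] F(2)[of 0 1] by auto
    thus ?thesis by (intro phi_mono) auto
  qed
  finally show ?thesis using a by (simp add: Cw_def)
qed

lemma flip_parity:
  assumes xs: "xs \<in> Arr U" and pos: "\<forall>a\<in>U. a > 0" and one: "1 \<in> U"
  shows "even (negc (flip1 xs)) = odd (negc xs)"
proof -
  note F = Arr_facts[OF xs pos]
  obtain j where j: "j < length xs" "\<bar>xs ! j\<bar> = 1"
    using xs one by (auto simp: Arr_def in_set_conv_nth)
  have uniq: "i < length xs \<Longrightarrow> \<bar>xs ! i\<bar> = 1 \<Longrightarrow> i = j" for i
    using F(2)[of i j] j by auto
  define B where "B = {i. i < length xs \<and> i \<noteq> j \<and> xs ! i < 0}"
  have fB: "finite B" "j \<notin> B" by (auto simp: B_def)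
  have fn: "flip1 xs ! i = phi (xs ! i)" if "i < length xs" for i using that by (simp add: flip1_def)
  have fi: "flip1 xs ! i = xs ! i" if "i < length xs" "i \<noteq> j" for i
    using fn[OF that(1)] uniq[OF that(1)] that(2) by (auto simp: phi_def)
  have fj: "flip1 xs ! j = - (xs ! j)" using fn[OF j(1)] j(2) by (simp add: phi_def)
  have xj: "xs ! j \<noteq> 0" using F(1)[OF j(1)] .
  have s1: "{i. i < length xs \<and> xs ! i < 0} = (if xs ! j < 0 then insert j B else B)"
    using j by (auto simp: B_def)
  have "(i < length xs \<and> flip1 xs ! i < 0) = ((i < length xs \<and> i \<noteq> j \<and> xs ! i < 0) \<or> (i = j \<and> \<not> xs ! j < 0))" for i
  proof (cases "i = j")
    case True thus ?thesis using fj xj j by auto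
  next
    case False thus ?thesis using fi by auto
  qed
  hence s2: "{i. i < length (flip1 xs) \<and> flip1 xs ! i < 0} = (if xs ! j < 0 then B else insert j B)"
    by (auto simp: B_def flip1_def)
  show ?thesis using s1 s2 fB by (simp add: negc_def)
qed

lemma half_count:
  assumes n: "2 \<le> n"
  shows "2 * card {xs \<in> Arr {1..int n}. even (negc xs) \<and> Cw S xs} = card {xs \<in> Arr {1..int n}. Cw S xs}"
proof -
  define U where "U = {1..int n}"
  have fU: "finite U" and pU: "\<forall>a\<in>U. a > 0" and one: "1 \<in> U" using n by (auto simp: U_def)
  have len: "xs \<in> Arr U \<Longrightarrow> length xs = n" for xs using Arr_length[of xs U] by (simp add: U_def)
  define E where "E = {xs \<in> Arr U. even (negc xs) \<and> Cw S xs}"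
  define Od where "Od = {xs \<in> Arr U. odd (negc xs) \<and> Cw S xs}"
  have fin: "finite E" "finite Od" using finite_Arr[OF fU] by (auto simp: E_def Od_def)
  have un: "{xs \<in> Arr U. Cw S xs} = E \<union> Od" "E \<inter> Od = {}" by (auto simp: E_def Od_def)
  have "bij_betw flip1 E Od"
  proof (rule bij_betw_byWitness[where f' = flip1])
    show "flip1 ` E \<subseteq> Od"
      using flip_Arr flip_Cw[OF _ pU] flip_parity[OF _ pU one] len n by (auto simp: E_def Od_def)
    show "flip1 ` Od \<subseteq> E"
      using flip_Arr flip_Cw[OF _ pU] flip_parity[OF _ pU one] len n by (auto simp: E_def Od_def)
  qed (simp_all add: flip_flip)
  hence "card E = card Od" by (rule bij_betw_same_card)
  hence "card {xs \<in> Arr U. Cw S xs} = 2 * card E" using un fin by (simp add: card_Un_disjoint)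
  thus ?thesis by (simp add: E_def U_def)
qed

lemma g_nu:
  assumes n: "2 \<le> n" and pc: "pseudo_comp n \<beta>"
  shows "card {w \<in> even_signed_perms n. descD n w \<subseteq> Dcomp \<beta>} = nu n \<beta>"
  using g_word[OF n, of "Dcomp \<beta>"] half_count[OF n, of "Dcomp \<beta>"] G_nu[OF n pc] by linarith



definition pcl :: "nat list \<Rightarrow> bool" where
  "pcl \<beta> = (\<beta> \<noteq> [] \<and> (\<forall>x\<in>set (tl \<beta>). x > 0))"

lemma pc_pcl: "pseudo_comp n \<beta> = (pcl \<beta> \<and> sum_list \<beta> = n)"
  by (auto simp: pseudo_comp_def pcl_def)

lemma Dcomp_snoc:
  assumes "xs \<noteq> []"
  shows "Dcomp (xs @ [c]) = insert (sum_list xs) (Dcomp xs)"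
proof
  show "Dcomp (xs @ [c]) \<subseteq> insert (sum_list xs) (Dcomp xs)"
  proof
    fix x assume "x \<in> Dcomp (xs @ [c])"
    then obtain k where k: "1 \<le> k" "k < length xs + 1" "x = sum_list (take k (xs @ [c]))"
      by (auto simp: Dcomp_def)
    hence x: "x = sum_list (take k xs)" by simp
    show "x \<in> insert (sum_list xs) (Dcomp xs)"
    proof (cases "k = length xs")
      case True thus ?thesis using x by simp
    next
      case False
      hence "k < length xs" using k by simp
      thus ?thesis using k x by (auto simp: Dcomp_def)
    qed
  qed
next
  show "insert (sum_list xs) (Dcomp xs) \<subseteq> Dcomp (xs @ [c])"
  proof
    fix x assume "x \<in> insert (sum_list xs) (Dcomp xs)"
    hence "x = sum_list xs \<or> (\<exists>k. x = sum_list (take k xs) \<and> 1 \<le> k \<and> k < length xs)"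
      by (auto simp: Dcomp_def)
    thus "x \<in> Dcomp (xs @ [c])"
    proof
      assume "x = sum_list xs"
      hence "x = sum_list (take (length xs) (xs @ [c])) \<and> 1 \<le> length xs \<and> length xs < length (xs @ [c])"
        using assms by (simp add: Suc_leI)
      thus ?thesis unfolding Dcomp_def by blast
    next
      assume "\<exists>k. x = sum_list (take k xs) \<and> 1 \<le> k \<and> k < length xs"
      then obtain k where "x = sum_list (take k xs)" "1 \<le> k" "k < length xs" by blast
      hence "x = sum_list (take k (xs @ [c])) \<and> 1 \<le> k \<and> k < length (xs @ [c])" by simp
      thus ?thesis unfolding Dcomp_def by blast
    qed
  qed
qed

lemma pcl_snoc: "xs \<noteq> [] \<Longrightarrow> pcl (xs @ [c]) = (pcl xs \<and> c > 0)"
  by (cases xs) (auto simp: pcl_def)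

lemma Dcomp_single: "Dcomp [c] = {}"
  by (simp add: Dcomp_def)

lemma Dcomp_props:
  "pcl \<beta> \<Longrightarrow> Dcomp \<beta> \<subseteq> {0..<sum_list \<beta>} \<and> card (Dcomp \<beta>) = length \<beta> - 1"
proof (induction \<beta> rule: rev_induct)
  case Nil thus ?case by (simp add: pcl_def)
next
  case (snoc x xs)
  show ?case
  proof (cases "xs = []")
    case True thus ?thesis by (simp add: Dcomp_single)
  next
    case False
    have p: "pcl xs" "x > 0" using snoc.prems pcl_snoc[OF False] by auto
    have IH: "Dcomp xs \<subseteq> {0..<sum_list xs}" "card (Dcomp xs) = length xs - 1" using snoc.IH p by auto
    have nin: "sum_list xs \<notin> Dcomp xs" using IH by auto
    have fin: "finite (Dcomp xs)" using IH finite_subset by blast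
    have "Dcomp (xs @ [x]) \<subseteq> {0..<sum_list (xs @ [x])}" using IH p by (auto simp: Dcomp_snoc[OF False])
    moreover have "card (Dcomp (xs @ [x])) = length (xs @ [x]) - 1"
      using IH nin fin False by (simp add: Dcomp_snoc[OF False])
    ultimately show ?thesis by blast
  qed
qed

lemma Dcomp_inj:
  "pcl \<beta>1 \<Longrightarrow> pcl \<beta>2 \<Longrightarrow> sum_list \<beta>1 = sum_list \<beta>2 \<Longrightarrow> Dcomp \<beta>1 = Dcomp \<beta>2 \<Longrightarrow> \<beta>1 = \<beta>2"
proof (induction \<beta>1 arbitrary: \<beta>2 rule: rev_induct)
  case Nil thus ?case by (simp add: pcl_def)
next
  case (snoc x xs)
  have "\<beta>2 \<noteq> []" using snoc.prems by (simp add: pcl_def)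
  then obtain ys y where b2: "\<beta>2 = ys @ [y]" by (metis rev_exhaust)
  have "length (xs @ [x]) - 1 = length \<beta>2 - 1"
    using Dcomp_props[OF snoc.prems(1)] Dcomp_props[OF snoc.prems(2)] snoc.prems(4) by metis
  hence lxy: "length xs = length ys" using b2 by simp
  show ?case
  proof (cases "xs = []")
    case True
    hence "ys = []" using lxy by simp
    thus ?thesis using True b2 snoc.prems(3) by simp
  next
    case False
    have ys: "ys \<noteq> []" using False lxy by auto
    have px: "pcl xs" and py: "pcl ys"
      using snoc.prems(1,2) pcl_snoc[OF False] pcl_snoc[OF ys] b2 by auto
    have Dx: "Dcomp xs \<subseteq> {0..<sum_list xs}" and Dy: "Dcomp ys \<subseteq> {0..<sum_list ys}"
      using Dcomp_props[OF px] Dcomp_props[OF py] by auto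
    have E: "insert (sum_list xs) (Dcomp xs) = insert (sum_list ys) (Dcomp ys)"
      using snoc.prems(4) b2 Dcomp_snoc[OF False] Dcomp_snoc[OF ys] by simp
    have "sum_list xs \<le> sum_list ys"
    proof -
      have "sum_list xs \<in> insert (sum_list ys) (Dcomp ys)" using E by blast
      thus ?thesis using Dy by auto
    qed
    moreover have "sum_list ys \<le> sum_list xs"
    proof -
      have "sum_list ys \<in> insert (sum_list xs) (Dcomp xs)" using E by blast
      thus ?thesis using Dx by auto
    qed
    ultimately have sxy: "sum_list xs = sum_list ys" by simp
    have "Dcomp xs = insert (sum_list xs) (Dcomp xs) - {sum_list xs}" using Dx by auto
    also have "\<dots> = insert (sum_list ys) (Dcomp ys) - {sum_list ys}" using E sxy by simp
    also have "\<dots> = Dcomp ys" using Dy by auto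
    finally have "xs = ys" using snoc.IH[OF px py sxy] by simp
    moreover have "x = y" using snoc.prems(3) b2 sxy \<open>xs = ys\<close> by simp
    ultimately show ?thesis using b2 by simp
  qed
qed

lemma Dcomp_surj:
  "T \<subseteq> {0..<n} \<Longrightarrow> \<exists>\<beta>. pcl \<beta> \<and> sum_list \<beta> = n \<and> Dcomp \<beta> = T"
proof (induction n arbitrary: T rule: less_induct)
  case (less n)
  show ?case
  proof (cases "T = {}")
    case True
    have "pcl [n] \<and> sum_list [n] = n \<and> Dcomp [n] = T" using True by (simp add: pcl_def Dcomp_single)
    thus ?thesis by blast
  next
    case False
    have fT: "finite T" using less.prems finite_subset by blast
    define m where "m = Max T"
    have mT: "m \<in> T" using fT False by (simp add: m_def)
    have mn: "m < n" using mT less.prems by auto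
    have T': "T - {m} \<subseteq> {0..<m}"
    proof
      fix x assume x: "x \<in> T - {m}"
      hence "x \<le> m" using fT by (simp add: m_def)
      thus "x \<in> {0..<m}" using x by auto
    qed
    obtain \<beta>' where b: "pcl \<beta>'" "sum_list \<beta>' = m" "Dcomp \<beta>' = T - {m}"
      using less.IH[OF mn T'] by blast
    have ne: "\<beta>' \<noteq> []" using b by (simp add: pcl_def)
    have "pcl (\<beta>' @ [n - m])" using pcl_snoc[OF ne] b mn by simp
    moreover have "sum_list (\<beta>' @ [n - m]) = n" using b mn by simp
    moreover have "Dcomp (\<beta>' @ [n - m]) = T" using Dcomp_snoc[OF ne] b mT by auto
    ultimately show ?thesis by blast
  qed
qed



theorem proposition5p1:
  fixes n :: nat and \<alpha> :: "nat list"
  assumes "n \<ge> 4" and "pseudo_comp n \<alpha>"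
  shows "int (ribbonD n \<alpha>) =
    (\<Sum>\<beta>\<in>{\<beta>. pseudo_comp n \<beta> \<and> Dcomp \<beta> \<subseteq> Dcomp \<alpha>}.
        (-1::int) ^ (length \<alpha> - length \<beta>) * int (nu n \<beta>))"
proof -
  have n2: "2 \<le> n" using assms(1) by simp
  define E where "E = even_signed_perms n"
  have "finite (signed_perms n)"
    using bij_betw_finite[OF word_bij[of n]] finite_Arr[of "{1..int n}"] by simp
  hence fE: "finite E" unfolding E_def even_signed_perms_def by simp
  define f where "f T = int (card {w \<in> E. descD n w = T})" for T
  define g where "g T = int (card {w \<in> E. descD n w \<subseteq> T})" for T
  have gf: "g S = sum f (Pow S)" if "finite S" for S
  proof -
    have "{w \<in> E. descD n w \<subseteq> S} = (\<Union>T\<in>Pow S. {w \<in> E. descD n w = T})" by auto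
    hence "card {w \<in> E. descD n w \<subseteq> S} = (\<Sum>T\<in>Pow S. card {w \<in> E. descD n w = T})"
      using card_UN_disjoint[of "Pow S" "\<lambda>T. {w \<in> E. descD n w = T}"] that fE by auto
    thus ?thesis by (simp add: f_def g_def)
  qed
  have pa: "pcl \<alpha>" "sum_list \<alpha> = n" using assms(2) by (auto simp: pc_pcl)
  have Da: "Dcomp \<alpha> \<subseteq> {0..<n}" "card (Dcomp \<alpha>) = length \<alpha> - 1"
    using Dcomp_props[OF pa(1)] pa(2) by auto
  have fDa: "finite (Dcomp \<alpha>)" using Da finite_subset by blast
  have m1: "f (Dcomp \<alpha>) = (\<Sum>T\<in>Pow (Dcomp \<alpha>). (-1) ^ (card (Dcomp \<alpha>) - card T) * g T)"
    by (rule inclusion_exclusion_mobius[OF gf fDa])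
  have m2: "int (ribbonD n \<alpha>) = f (Dcomp \<alpha>)" by (simp add: ribbonD_def f_def E_def)
  define B where "B = {\<beta>. pseudo_comp n \<beta> \<and> Dcomp \<beta> \<subseteq> Dcomp \<alpha>}"
  have bij: "bij_betw Dcomp B (Pow (Dcomp \<alpha>))"
    unfolding bij_betw_def
  proof
    show "inj_on Dcomp B"
      by (rule inj_onI) (auto simp: B_def pc_pcl intro: Dcomp_inj)
    show "Dcomp ` B = Pow (Dcomp \<alpha>)"
    proof
      show "Dcomp ` B \<subseteq> Pow (Dcomp \<alpha>)" by (auto simp: B_def)
      show "Pow (Dcomp \<alpha>) \<subseteq> Dcomp ` B"
      proof
        fix T assume "T \<in> Pow (Dcomp \<alpha>)"
        hence T: "T \<subseteq> Dcomp \<alpha>" by simp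
        hence "T \<subseteq> {0..<n}" using Da by blast
        then obtain \<beta> where "pcl \<beta>" "sum_list \<beta> = n" "Dcomp \<beta> = T" using Dcomp_surj by blast
        hence "\<beta> \<in> B" "T = Dcomp \<beta>" using T by (auto simp: B_def pc_pcl)
        thus "T \<in> Dcomp ` B" by blast
      qed
    qed
  qed
  have "(\<Sum>\<beta>\<in>B. (-1::int) ^ (length \<alpha> - length \<beta>) * int (nu n \<beta>)) =
        (\<Sum>\<beta>\<in>B. (-1) ^ (card (Dcomp \<alpha>) - card (Dcomp \<beta>)) * g (Dcomp \<beta>))"
  proof (rule sum.cong[OF refl])
    fix \<beta> assume b: "\<beta> \<in> B"
    hence pb: "pseudo_comp n \<beta>" by (simp add: B_def)
    hence "pcl \<beta>" by (simp add: pc_pcl)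
    hence "card (Dcomp \<beta>) = length \<beta> - 1" using Dcomp_props by blast
    moreover have "length \<beta> \<ge> 1" "length \<alpha> \<ge> 1" using pb assms(2) by (auto simp: pseudo_comp_def Suc_le_eq)
    ultimately have "length \<alpha> - length \<beta> = card (Dcomp \<alpha>) - card (Dcomp \<beta>)" using Da by simp
    moreover have "g (Dcomp \<beta>) = int (nu n \<beta>)" using g_nu[OF n2 pb] by (simp add: g_def E_def)
    ultimately show "(-1::int) ^ (length \<alpha> - length \<beta>) * int (nu n \<beta>) =
        (-1) ^ (card (Dcomp \<alpha>) - card (Dcomp \<beta>)) * g (Dcomp \<beta>)" by simp
  qed
  also have "\<dots> = (\<Sum>T\<in>Pow (Dcomp \<alpha>). (-1) ^ (card (Dcomp \<alpha>) - card T) * g T)"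
    by (rule sum.reindex_bij_betw[OF bij, where g = "\<lambda>T. (-1) ^ (card (Dcomp \<alpha>) - card T) * g T"])
  finally have m3: "(\<Sum>\<beta>\<in>B. (-1::int) ^ (length \<alpha> - length \<beta>) * int (nu n \<beta>)) =
     (\<Sum>T\<in>Pow (Dcomp \<alpha>). (-1) ^ (card (Dcomp \<alpha>) - card T) * g T)" .
  show ?thesis using m1 m2 m3 by (simp add: B_def)
qed


end
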